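(* Let $A$ and $B$ be self-adjoint operators on the same complex Hilbert space, with $B$ bounded, non-negative and $B \neq 0$. If $\lambda\in\mathbb{R}$ is an accumulation point of $\mathbb{R} \setminus \bigcup_{t\in\mathbb{R}} \sigma(A+tB)$, then $\lambda \in \sigma(A+tB)$ for all $t \in \mathbb{R}$. In particular, $\mathbb{R} \setminus \bigcup_{t\in\mathbb{R}} \sigma(A+tB)$ contains none of its accumulation points.
   Context: $\sigma(T)$ denotes the spectrum of an operator $T$. $A$ may be unbounded; $A+tB$ is defined on the domain of $A$. *)

theory Defs
  imports "HOL-Analysis.Analysis"
begin

class complex_vector = real_vector +
  fixes scaleC :: "complex \<Rightarrow> 'a \<Rightarrow> 'a" (infixr \<open>*\<^sub>C\<close> 75)
  assumes scaleC_add_right: "scaleC a (x + y) = scaleC a x + scaleC a y"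
    and scaleC_add_left: "scaleC (a + b) x = scaleC a x + scaleC b x"
    and scaleC_scaleC: "scaleC a (scaleC b x) = scaleC (a * b) x"
    and scaleC_one: "scaleC 1 x = x"
    and scaleR_scaleC: "scaleR r x = scaleC (complex_of_real r) x"

class complex_inner = complex_vector + real_normed_vector +
  fixes cinner :: "'a \<Rightarrow> 'a \<Rightarrow> complex"
  assumes cinner_commute: "cinner x y = cnj (cinner y x)"
    and cinner_add_left: "cinner (x + y) z = cinner x z + cinner y z"
    and cinner_scaleC_left: "cinner (scaleC r x) y = cnj r * cinner x y"
    and cinner_real: "Im (cinner x x) = 0"
    and cinner_ge_zero: "0 \<le> Re (cinner x x)"
    and cinner_eq_zero_iff: "cinner x x = 0 \<longleftrightarrow> x = 0"
    and norm_eq_sqrt_cinner: "norm x = sqrt (Re (cinner x x))"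

class chilbert_space = complex_inner + complete_space

instantiation complex :: chilbert_space
begin
definition scaleC_complex :: "complex \<Rightarrow> complex \<Rightarrow> complex" where
  "scaleC_complex a x = a * x"
definition cinner_complex :: "complex \<Rightarrow> complex \<Rightarrow> complex" where
  "cinner_complex x y = cnj x * y"
instance
  by standard (auto simp: scaleC_complex_def cinner_complex_def algebra_simps
      scaleR_conv_of_real complex_norm_square cmod_def complex_eq_iff power2_eq_square)
end

definition csubspace :: "'a::complex_vector set \<Rightarrow> bool" where
  "csubspace S \<longleftrightarrow> 0 \<in> S \<and> (\<forall>x\<in>S. \<forall>y\<in>S. x + y \<in> S) \<and> (\<forall>c. \<forall>x\<in>S. c *\<^sub>C x \<in> S)"

definition clinear_on :: "'a::complex_vector set \<Rightarrow> ('a \<Rightarrow> 'b::complex_vector) \<Rightarrow> bool" where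
  "clinear_on D T \<longleftrightarrow> (\<forall>x\<in>D. \<forall>y\<in>D. T (x + y) = T x + T y) \<and> (\<forall>c. \<forall>x\<in>D. T (c *\<^sub>C x) = c *\<^sub>C T x)"

definition adjoint_domain :: "'a::complex_inner set \<Rightarrow> ('a \<Rightarrow> 'a) \<Rightarrow> 'a set" where
  "adjoint_domain D T = {y. \<exists>z. \<forall>x\<in>D. cinner (T x) y = cinner x z}"

text \<open>Self-adjoint: densely defined linear, \<open>D(T*) = D(T)\<close> and \<open>T* = T\<close> on it
  (the adjoint value is unique by density, so this is \<open>T* = T\<close>).\<close>
definition self_adjoint :: "'a::complex_inner set \<Rightarrow> ('a \<Rightarrow> 'a) \<Rightarrow> bool" where
  "self_adjoint D T \<longleftrightarrow> csubspace D \<and> closure D = UNIV \<and> clinear_on D T \<and>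
     adjoint_domain D T = D \<and> (\<forall>x\<in>D. \<forall>y\<in>D. cinner (T x) y = cinner x (T y))"

definition bounded_op :: "('a::complex_inner \<Rightarrow> 'a) \<Rightarrow> bool" where
  "bounded_op T \<longleftrightarrow> clinear_on UNIV T \<and> (\<exists>K. \<forall>x. norm (T x) \<le> K * norm x)"

definition op_spectrum :: "'a::complex_inner set \<Rightarrow> ('a \<Rightarrow> 'a) \<Rightarrow> complex set" where
  "op_spectrum D T = {z. \<not> (bij_betw (\<lambda>x. T x - z *\<^sub>C x) D UNIV \<and>
      (\<exists>K. \<forall>y. norm (inv_into D (\<lambda>x. T x - z *\<^sub>C x) y) \<le> K * norm y))}"

end

theory Submission
  imports Defs
begin


lemma scaleC_zero_right [simp]: "a *\<^sub>C (0::'a::complex_vector) = 0"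
proof -
  have "a *\<^sub>C (0::'a) = a *\<^sub>C 0 + a *\<^sub>C 0" by (metis add.right_neutral scaleC_add_right)
  then show ?thesis by simp
qed

lemma scaleC_zero_left [simp]: "0 *\<^sub>C (x::'a::complex_vector) = 0"
  by (metis scaleR_scaleC scaleR_zero_left of_real_0)

lemma scaleC_minus_right: "a *\<^sub>C (- x::'a::complex_vector) = - (a *\<^sub>C x)"
  by (metis add.right_inverse eq_neg_iff_add_eq_0 scaleC_add_right scaleC_zero_right)

lemma scaleC_diff_right: "a *\<^sub>C (x - y::'a::complex_vector) = a *\<^sub>C x - a *\<^sub>C y"
  unfolding diff_conv_add_uminus by (simp only: scaleC_add_right scaleC_minus_right)

lemma scaleC_minus_left: "(- a) *\<^sub>C (x::'a::complex_vector) = - (a *\<^sub>C x)"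
  by (metis add.right_inverse eq_neg_iff_add_eq_0 scaleC_add_left scaleC_zero_left)

lemma scaleC_diff_left: "(a - b) *\<^sub>C (x::'a::complex_vector) = a *\<^sub>C x - b *\<^sub>C x"
  unfolding diff_conv_add_uminus by (simp only: scaleC_add_left scaleC_minus_left)

lemma scaleC_scaleR_comm: "a *\<^sub>C (r *\<^sub>R (x::'a::complex_vector)) = r *\<^sub>R (a *\<^sub>C x)"
  by (simp add: scaleR_scaleC scaleC_scaleC mult.commute)

lemma cinner_add_right: "cinner x (y + z) = cinner x y + cinner (x::'a::complex_inner) z"
  by (metis cinner_add_left cinner_commute complex_cnj_add)

lemma cinner_scaleC_right: "cinner x (a *\<^sub>C y) = a * cinner (x::'a::complex_inner) y"
  by (metis cinner_commute cinner_scaleC_left complex_cnj_cnj complex_cnj_mult)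

lemma cinner_zero_left [simp]: "cinner 0 (y::'a::complex_inner) = 0"
  by (metis add.right_neutral add_cancel_right_right cinner_add_left)

lemma cinner_zero_right [simp]: "cinner (y::'a::complex_inner) 0 = 0"
  by (metis cinner_commute cinner_zero_left complex_cnj_zero)

lemma cinner_minus_left: "cinner (- x) (y::'a::complex_inner) = - cinner x y"
  by (metis add.right_inverse cinner_add_left cinner_zero_left eq_neg_iff_add_eq_0)

lemma cinner_minus_right: "cinner y (- x::'a::complex_inner) = - cinner y x"
  by (metis cinner_commute cinner_minus_left complex_cnj_minus)

lemma cinner_diff_left: "cinner (x - z) (y::'a::complex_inner) = cinner x y - cinner z y"
  unfolding diff_conv_add_uminus by (simp only: cinner_add_left cinner_minus_left)

lemma cinner_diff_right: "cinner y (x - z::'a::complex_inner) = cinner y x - cinner y z"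
  unfolding diff_conv_add_uminus by (simp only: cinner_add_right cinner_minus_right)

lemma cinner_scaleR_left: "cinner (r *\<^sub>R x) (y::'a::complex_inner) = of_real r * cinner x y"
  by (simp add: scaleR_scaleC cinner_scaleC_left)

lemma cinner_scaleR_right: "cinner y (r *\<^sub>R x::'a::complex_inner) = of_real r * cinner y x"
  by (simp add: scaleR_scaleC cinner_scaleC_right)

lemma norm_sq_cinner: "(norm (x::'a::complex_inner))^2 = Re (cinner x x)"
  by (simp add: norm_eq_sqrt_cinner cinner_ge_zero)

lemma cinner_self: "cinner x x = complex_of_real ((norm (x::'a::complex_inner))^2)"
  by (simp add: norm_sq_cinner complex_eq_iff cinner_real)

lemmas cinner_simps = cinner_add_left cinner_add_right cinner_scaleC_left cinner_scaleC_right
  cinner_minus_left cinner_minus_right cinner_diff_left cinner_diff_right cinner_scaleR_left cinner_scaleR_right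

lemma herm_cs:
  fixes N :: "'a::complex_inner \<Rightarrow> 'a"
  assumes add: "\<And>x y. N (x + y) = N x + N y" and sc: "\<And>a x. N (a *\<^sub>C x) = a *\<^sub>C N x"
    and sym: "\<And>x y. cinner (N x) y = cinner x (N y)"
    and pos: "\<And>x. 0 \<le> Re (cinner (N x) x)"
  shows "(cmod (cinner (N x) y))^2 \<le> Re (cinner (N x) x) * Re (cinner (N y) y)"
proof -
  have real: "Im (cinner (N z) z) = 0" for z
  proof -
    have e: "cinner (N z) z = cnj (cinner (N z) z)" by (metis sym cinner_commute)
    have "Im (cinner (N z) z) = Im (cnj (cinner (N z) z))" using e by simp
    then show ?thesis by simp
  qed
  define c where "c = cinner (N x) y"
  have cc: "cinner (N y) x = cnj c" unfolding c_def by (metis cinner_commute sym)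
  have expand: "cinner (N (x + a *\<^sub>C y)) (x + a *\<^sub>C y) =
     cinner (N x) x + a * c + cnj a * cnj c + cnj a * a * cinner (N y) y" for a
  proof -
    have "cinner (N (x + a *\<^sub>C y)) (x + a *\<^sub>C y) = cinner (N x + a *\<^sub>C N y) (x + a *\<^sub>C y)"
      by (simp only: add sc)
    also have "\<dots> = cinner (N x) x + a * cinner (N x) y + (cnj a * cinner (N y) x + cnj a * (a * cinner (N y) y))"
      by (simp add: cinner_add_left cinner_add_right cinner_scaleC_left cinner_scaleC_right algebra_simps)
    finally show ?thesis unfolding cc c_def by (simp only: mult.assoc add.assoc)
  qed
  have key: "0 \<le> Re (cinner (N x) x) - 2 * t * (cmod c)^2 + t^2 * (cmod c)^2 * Re (cinner (N y) y)" for t :: real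
  proof -
    define a where "a = - of_real t * cnj c"
    have "0 \<le> Re (cinner (N (x + a *\<^sub>C y)) (x + a *\<^sub>C y))"
      by (rule pos)
    also have "\<dots> = Re (cinner (N x) x) + Re (a * c) + Re (cnj a * cnj c) + Re (cnj a * a * cinner (N y) y)"
      unfolding expand by simp
    also have "Re (a * c) = - t * (cmod c)^2" unfolding a_def cmod_power2
      by (simp add: power2_eq_square algebra_simps)
    also have "Re (cnj a * cnj c) = - t * (cmod c)^2" unfolding a_def cmod_power2
      by (simp add: power2_eq_square algebra_simps)
    also have "cnj a * a = of_real (t^2 * (cmod c)^2)" unfolding a_def cmod_power2
      by (simp add: complex_eq_iff power2_eq_square algebra_simps)
    also have "Re (of_real (t^2 * (cmod c)^2) * cinner (N y) y) = t^2 * (cmod c)^2 * Re (cinner (N y) y)"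
      by simp
    finally show ?thesis by simp
  qed
  show ?thesis
  proof (cases "Re (cinner (N y) y) = 0")
    case True
    have "(cmod c)^2 \<le> 0"
    proof (rule ccontr)
      assume "\<not> (cmod c)^2 \<le> 0"
      then have p: "(cmod c)^2 > 0" by simp
      define t where "t = (Re (cinner (N x) x) + 1) / (2 * (cmod c)^2)"
      have "2 * t * (cmod c)^2 = Re (cinner (N x) x) + 1" using p unfolding t_def by simp
      with key[of t] True show False by simp
    qed
    then show ?thesis using True pos[of x] unfolding c_def by simp
  next
    case False
    define r where "r = Re (cinner (N y) y)"
    have r: "r > 0" using False pos[of y] unfolding r_def by simp
    have "0 \<le> Re (cinner (N x) x) - 2 * (1/r) * (cmod c)^2 + (1/r)^2 * (cmod c)^2 * r"
      using key[of "1/r"] unfolding r_def by simp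
    also have "\<dots> = Re (cinner (N x) x) - (cmod c)^2 / r"
      using r by (simp add: power2_eq_square field_simps)
    finally have "(cmod c)^2 / r \<le> Re (cinner (N x) x)" by simp
    then show ?thesis using r unfolding c_def r_def by (simp add: field_simps)
  qed
qed

lemma cinner_cs: "cmod (cinner x y) \<le> norm x * norm (y::'a::complex_inner)"
proof -
  have "(cmod (cinner (id x) y))^2 \<le> Re (cinner (id x) x) * Re (cinner (id y) y)"
    by (rule herm_cs) (simp_all add: cinner_ge_zero)
  then have "(cmod (cinner x y))^2 \<le> (norm x * norm y)^2"
    by (simp add: norm_sq_cinner power_mult_distrib)
  then show ?thesis by (rule power2_le_imp_le) simp
qed

lemma pos_op_bound:
  fixes N :: "'a::complex_inner \<Rightarrow> 'a"
  assumes add: "\<And>x y. N (x + y) = N x + N y" and sc: "\<And>a x. N (a *\<^sub>C x) = a *\<^sub>C N x"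
    and sym: "\<And>x y. cinner (N x) y = cinner x (N y)"
    and pos: "\<And>x. 0 \<le> Re (cinner (N x) x)"
    and bd: "\<And>x. norm (N x) \<le> K * norm x"
  shows "(norm (N x))^2 \<le> K * Re (cinner (N x) x)"
proof (cases "N x = 0")
  case True
  then show ?thesis by simp
next
  case False
  let ?n = "norm (N x)"
  have n: "?n > 0" using False by simp
  have 1: "(cmod (cinner (N x) (N x)))^2 \<le> Re (cinner (N x) x) * Re (cinner (N (N x)) (N x))"
    by (rule herm_cs[OF add sc sym pos])
  have 2: "cmod (cinner (N x) (N x)) = ?n^2"
    by (simp only: cinner_self norm_of_real) simp
  have 3: "Re (cinner (N (N x)) (N x)) \<le> K * ?n^2"
  proof -
    have "Re (cinner (N (N x)) (N x)) \<le> cmod (cinner (N (N x)) (N x))" by (rule complex_Re_le_cmod)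
    also have "\<dots> \<le> norm (N (N x)) * ?n" by (rule cinner_cs)
    also have "\<dots> \<le> K * ?n * ?n" using bd[of "N x"] n by (simp add: mult_right_mono)
    finally show ?thesis by (simp add: power2_eq_square)
  qed
  have "Re (cinner (N x) x) * Re (cinner (N (N x)) (N x)) \<le> Re (cinner (N x) x) * (K * ?n^2)"
    using 3 pos[of x] by (rule mult_left_mono)
  with 1 2 have "(?n^2)^2 \<le> Re (cinner (N x) x) * (K * ?n^2)"
    by simp
  then have "?n^2 * ?n^2 \<le> (K * Re (cinner (N x) x)) * ?n^2"
    by (simp add: power2_eq_square algebra_simps)
  then show ?thesis using n by (metis mult_right_le_imp_le zero_less_power)
qed



lemma lin_zero:
  assumes sc: "\<And>a x. N (a *\<^sub>C x) = a *\<^sub>C N x"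
  shows "N (0::'a::complex_vector) = (0::'b::complex_vector)"
  by (metis sc scaleC_zero_left)

lemma sup_arg:
  fixes S B Q :: "'a::complex_inner \<Rightarrow> 'a" and D :: "'a set" and \<mu> \<sigma> KB KQ :: real
  assumes Badd: "\<And>x y. B (x + y) = B x + B y" and Bsc: "\<And>a x. B (a *\<^sub>C x) = a *\<^sub>C B x"
    and Bsym: "\<And>x y. cinner (B x) y = cinner x (B y)" and Bpos: "\<And>x. 0 \<le> Re (cinner (B x) x)"
    and Bbd: "\<And>x. norm (B x) \<le> KB * norm x" and KB: "KB > 0"
    and Qadd: "\<And>x y. Q (x + y) = Q x + Q y" and Qsc: "\<And>a x. Q (a *\<^sub>C x) = a *\<^sub>C Q x"
    and Qsym: "\<And>x y. cinner (Q x) y = cinner x (Q y)"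
    and Qbd: "\<And>x. norm (Q x) \<le> KQ * norm x" and KQ: "KQ \<ge> 0"
    and QD: "\<And>y. Q y \<in> D"
    and Qeq: "\<And>y. S (Q y) - complex_of_real \<mu> *\<^sub>C Q y = \<sigma> *\<^sub>R y"
    and \<sigma>: "\<sigma> \<noteq> 0"
    and res: "\<And>s::real. \<exists>K. \<forall>x\<in>D. norm x \<le> K * norm (S x + s *\<^sub>R B x - complex_of_real \<mu> *\<^sub>C x)"
  shows "Re (cinner (Q (B x0)) (B x0)) \<le> 0"
proof (rule ccontr)
  assume "\<not> ?thesis"
  then have q0: "Re (cinner (Q (B x0)) (B x0)) > 0" by simp
  define b where "b x = Re (cinner (B x) x)" for x
  define q where "q x = Re (cinner (Q (B x)) (B x))" for x
  have B0: "B 0 = 0" by (rule lin_zero[OF Bsc])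
  have Q0: "Q 0 = 0" by (rule lin_zero[OF Qsc])
  have bnn: "0 \<le> b x" for x unfolding b_def by (rule Bpos)
  have Bsq: "(norm (B x))^2 \<le> KB * b x" for x
    unfolding b_def by (rule pos_op_bound[OF Badd Bsc Bsym Bpos Bbd])
  have qcs: "q x \<le> norm (Q (B x)) * norm (B x)" for x
  proof -
    have "q x \<le> cmod (cinner (Q (B x)) (B x))" unfolding q_def by (rule complex_Re_le_cmod)
    also have "\<dots> \<le> norm (Q (B x)) * norm (B x)" by (rule cinner_cs)
    finally show ?thesis .
  qed
  have qle: "q x \<le> KQ * KB * b x" for x
  proof -
    have "q x \<le> norm (Q (B x)) * norm (B x)" by (rule qcs)
    also have "\<dots> \<le> KQ * norm (B x) * norm (B x)"
      using Qbd[of "B x"] by (simp add: mult_right_mono)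
    also have "\<dots> = KQ * (norm (B x))^2" by (simp add: power2_eq_square)
    also have "\<dots> \<le> KQ * (KB * b x)" using Bsq[of x] KQ by (rule mult_left_mono)
    finally show ?thesis by simp
  qed
  define X where "X = q ` {x. b x \<le> 1}"
  define M where "M = Sup X"
  have q00: "q 0 = 0" unfolding q_def by (simp add: B0 Q0)
  have b00: "b 0 = 0" unfolding b_def by (simp add: B0)
  have X0: "0 \<in> X" unfolding X_def using q00 b00 by (metis (mono_tags, lifting) image_eqI mem_Collect_eq zero_le_one)
  have bdd: "bdd_above X"
  proof (rule bdd_aboveI)
    fix y assume "y \<in> X"
    then obtain x where x: "b x \<le> 1" "y = q x" unfolding X_def by auto
    have "q x \<le> KQ * KB * b x" by (rule qle)
    also have "\<dots> \<le> KQ * KB * 1" using x(1) KQ KB by (intro mult_left_mono) auto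
    finally show "y \<le> KQ * KB" using x by simp
  qed
  have upper: "q x \<le> M" if "b x \<le> 1" for x
    unfolding M_def using bdd that by (intro cSup_upper) (auto simp: X_def)
  have M0: "0 \<le> M" using upper[of 0] b00 q00 by simp
  have qM: "q x \<le> M * b x" for x
  proof (cases "b x = 0")
    case True
    then have "(norm (B x))^2 \<le> 0" using Bsq[of x] by simp
    then have "B x = 0" by simp
    then show ?thesis unfolding q_def using True by (simp add: Q0)
  next
    case False
    then have bp: "b x > 0" using bnn[of x] by simp
    define c where "c = 1 / sqrt (b x)"
    have c2: "c * c = 1 / b x" unfolding c_def using bp by (simp add: real_sqrt_mult[symmetric])
    have Bc: "B (c *\<^sub>R x) = c *\<^sub>R B x" by (simp add: scaleR_scaleC Bsc)
    have Qc: "Q (c *\<^sub>R y) = c *\<^sub>R Q y" for y by (simp add: scaleR_scaleC Qsc)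
    have "b (c *\<^sub>R x) = c * c * b x" unfolding b_def Bc by (simp add: cinner_scaleR_left cinner_scaleR_right)
    then have "b (c *\<^sub>R x) = 1" using c2 bp by simp
    then have "q (c *\<^sub>R x) \<le> M" by (simp add: upper)
    moreover have "q (c *\<^sub>R x) = c * c * q x" unfolding q_def Bc Qc by (simp add: cinner_scaleR_left cinner_scaleR_right)
    ultimately have "q x / b x \<le> M" using c2 by simp
    then show ?thesis using bp by (simp add: divide_le_eq mult.commute)
  qed
  have Mpos: "M > 0"
  proof (rule ccontr)
    assume "\<not> M > 0"
    then have "M * b x0 \<le> 0" using bnn[of x0] by (simp add: mult_nonpos_nonneg)
    then show False using qM[of x0] q0 unfolding q_def by simp
  qed
  define N where "N x = M *\<^sub>R B x - B (Q (B x))" for x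
  have Nadd: "N (x + y) = N x + N y" for x y
    unfolding N_def by (simp add: Badd Qadd scaleR_add_right algebra_simps)
  have Nsc: "N (a *\<^sub>C x) = a *\<^sub>C N x" for a x
    unfolding N_def by (simp add: Bsc Qsc scaleC_diff_right scaleC_scaleR_comm)
  have BQB: "cinner (B (Q (B x))) y = cinner x (B (Q (B y)))" for x y
    by (metis Bsym Qsym)
  have Nsym: "cinner (N x) y = cinner x (N y)" for x y
    unfolding N_def cinner_diff_left cinner_diff_right cinner_scaleR_left cinner_scaleR_right BQB by (simp add: Bsym)
  have NRe: "Re (cinner (N x) x) = M * b x - q x" for x
  proof -
    have "cinner (B (Q (B x))) x = cinner (Q (B x)) (B x)" by (rule Bsym)
    then show ?thesis unfolding N_def b_def q_def by (simp add: cinner_diff_left cinner_scaleR_left)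
  qed
  have Npos: "0 \<le> Re (cinner (N x) x)" for x using NRe[of x] qM[of x] by simp
  define KN where "KN = M * KB + KB * (KQ * KB)"
  have KN: "KN \<ge> 0" unfolding KN_def using Mpos KB KQ by simp
  have Nbd: "norm (N x) \<le> KN * norm x" for x
  proof -
    have "norm (N x) \<le> norm (M *\<^sub>R B x) + norm (B (Q (B x)))" unfolding N_def by (rule norm_triangle_ineq4)
    also have "norm (M *\<^sub>R B x) \<le> M * (KB * norm x)" using Bbd[of x] Mpos by (simp add: mult_left_mono)
    also have "norm (B (Q (B x))) \<le> KB * (KQ * (KB * norm x))"
    proof -
      have "norm (B (Q (B x))) \<le> KB * norm (Q (B x))" by (rule Bbd)
      also have "\<dots> \<le> KB * (KQ * norm (B x))" using Qbd[of "B x"] KB by (simp add: mult_left_mono)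
      also have "\<dots> \<le> KB * (KQ * (KB * norm x))" using Bbd[of x] KB KQ by (simp add: mult_left_mono)
      finally show ?thesis .
    qed
    finally show ?thesis unfolding KN_def by (simp add: algebra_simps)
  qed
  have Nsq: "(norm (N x))^2 \<le> KN * Re (cinner (N x) x)" for x
    by (rule pos_op_bound[OF Nadd Nsc Nsym Npos Nbd])
  define s where "s = - \<sigma> / M"
  obtain Ks where Ks: "\<forall>x\<in>D. norm x \<le> Ks * norm (S x + s *\<^sub>R B x - complex_of_real \<mu> *\<^sub>C x)"
    using res by blast
  have zeq: "S (Q (B x)) + s *\<^sub>R B (Q (B x)) - complex_of_real \<mu> *\<^sub>C Q (B x) = (\<sigma> / M) *\<^sub>R N x" for x
  proof -
    have "S (Q (B x)) + s *\<^sub>R B (Q (B x)) - complex_of_real \<mu> *\<^sub>C Q (B x)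
        = (S (Q (B x)) - complex_of_real \<mu> *\<^sub>C Q (B x)) + s *\<^sub>R B (Q (B x))" by (simp add: algebra_simps)
    also have "\<dots> = \<sigma> *\<^sub>R B x + s *\<^sub>R B (Q (B x))" by (simp add: Qeq)
    also have "\<dots> = (\<sigma> / M) *\<^sub>R N x" unfolding N_def s_def using Mpos
      by (simp add: scaleR_diff_right algebra_simps)
    finally show ?thesis .
  qed
  have zbd: "norm (Q (B x)) \<le> Ks * (\<bar>\<sigma> / M\<bar> * norm (N x))" for x
  proof -
    have "norm (Q (B x)) \<le> Ks * norm (S (Q (B x)) + s *\<^sub>R B (Q (B x)) - complex_of_real \<mu> *\<^sub>C Q (B x))"
      using Ks QD[of "B x"] by blast
    also have "\<dots> = Ks * (\<bar>\<sigma> / M\<bar> * norm (N x))" by (simp only: zeq norm_scaleR)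
    finally show ?thesis .
  qed
  define C where "C = Ks^2 * (\<sigma> / M)^2 * KN * KB"
  have C: "C \<ge> 0" unfolding C_def using KN KB by simp
  define \<epsilon> where "\<epsilon> = min (M / 2) ((M / 2)^2 / (C + 1))"
  have \<epsilon>: "\<epsilon> > 0" unfolding \<epsilon>_def using Mpos C by simp
  obtain x where bx: "b x \<le> 1" and qx: "q x > M - \<epsilon>"
  proof -
    have "\<exists>y\<in>X. M - \<epsilon> < y"
    proof (rule ccontr)
      assume "\<not> ?thesis"
      then have "Sup X \<le> M - \<epsilon>" using X0 by (intro cSup_least) auto
      then show False using \<epsilon> unfolding M_def by simp
    qed
    then show ?thesis using that unfolding X_def by auto
  qed
  have qx2: "q x \<ge> M / 2" using qx \<epsilon>_def by simp
  have NRx: "Re (cinner (N x) x) \<le> \<epsilon>"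
  proof -
    have "M * b x \<le> M" using bx Mpos by (simp add: mult_le_cancel_left1)
    then show ?thesis using NRe[of x] qx by simp
  qed
  have nN: "(norm (N x))^2 \<le> KN * \<epsilon>"
    using Nsq[of x] NRx KN by (meson mult_left_mono order_trans)
  have nz: "(norm (Q (B x)))^2 \<le> Ks^2 * (\<sigma> / M)^2 * (norm (N x))^2"
  proof -
    have "(norm (Q (B x)))^2 \<le> (Ks * (\<bar>\<sigma> / M\<bar> * norm (N x)))^2"
      using zbd[of x] by (intro power_mono) auto
    also have "\<dots> = Ks^2 * (\<sigma> / M)^2 * (norm (N x))^2" by (simp only: power_mult_distrib power2_abs)
    finally show ?thesis .
  qed
  have qsq: "(q x)^2 \<le> (norm (Q (B x)))^2 * KB"
  proof -
    have "(q x)^2 \<le> (norm (Q (B x)) * norm (B x))^2"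
      using qcs[of x] qx2 Mpos by (intro power_mono) auto
    also have "\<dots> = (norm (Q (B x)))^2 * (norm (B x))^2" by (simp add: power_mult_distrib)
    also have "\<dots> \<le> (norm (Q (B x)))^2 * KB"
    proof -
      have "(norm (B x))^2 \<le> KB * b x" by (rule Bsq)
      also have "\<dots> \<le> KB" using bx KB by (simp add: mult_le_cancel_left1)
      finally show ?thesis by (simp add: mult_left_mono)
    qed
    finally show ?thesis .
  qed
  have "(M / 2)^2 \<le> (q x)^2" using qx2 Mpos by (intro power_mono) auto
  also have "\<dots> \<le> (norm (Q (B x)))^2 * KB" by (rule qsq)
  also have "\<dots> \<le> (Ks^2 * (\<sigma> / M)^2 * (norm (N x))^2) * KB" using nz KB by (simp add: mult_right_mono)
  also have "\<dots> \<le> (Ks^2 * (\<sigma> / M)^2 * (KN * \<epsilon>)) * KB"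
    using nN KB by (intro mult_right_mono mult_left_mono) auto
  also have "\<dots> = C * \<epsilon>" unfolding C_def by (simp add: algebra_simps)
  also have "\<dots> \<le> C * ((M / 2)^2 / (C + 1))" unfolding \<epsilon>_def using C by (intro mult_left_mono) auto
  also have "\<dots> < (M / 2)^2"
  proof -
    have "C * ((M / 2)^2 / (C + 1)) = (M / 2)^2 * (C / (C + 1))" by (simp add: field_simps)
    also have "\<dots> < (M / 2)^2 * 1" using C Mpos by (intro mult_strict_left_mono) auto
    finally show ?thesis by simp
  qed
  finally show False by simp
qed



context
  fixes S :: "'a::complex_inner \<Rightarrow> 'a" and D :: "'a set" and z :: complex
  assumes D: "csubspace D" and S: "clinear_on D S" and bij: "bij_betw (\<lambda>x. S x - z *\<^sub>C x) D UNIV"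
begin

lemma rb_in: "inv_into D (\<lambda>x. S x - z *\<^sub>C x) y \<in> D"
  using bij by (metis UNIV_I bij_betw_def inv_into_into)

lemma rb_right: "S (inv_into D (\<lambda>x. S x - z *\<^sub>C x) y) - z *\<^sub>C inv_into D (\<lambda>x. S x - z *\<^sub>C x) y = y"
proof -
  have "(\<lambda>x. S x - z *\<^sub>C x) (inv_into D (\<lambda>x. S x - z *\<^sub>C x) y) = y"
    by (rule f_inv_into_f) (use bij in \<open>auto simp: bij_betw_def\<close>)
  then show ?thesis by simp
qed

lemma rb_left: "x \<in> D \<Longrightarrow> inv_into D (\<lambda>x. S x - z *\<^sub>C x) (S x - z *\<^sub>C x) = x"
proof -
  assume x: "x \<in> D"
  have "inv_into D (\<lambda>x. S x - z *\<^sub>C x) ((\<lambda>x. S x - z *\<^sub>C x) x) = x"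
    by (rule inv_into_f_f) (use bij x in \<open>auto simp: bij_betw_def\<close>)
  then show ?thesis by simp
qed

lemma rb_add: "inv_into D (\<lambda>x. S x - z *\<^sub>C x) (y + w) =
   inv_into D (\<lambda>x. S x - z *\<^sub>C x) y + inv_into D (\<lambda>x. S x - z *\<^sub>C x) w"
proof -
  let ?R = "inv_into D (\<lambda>x. S x - z *\<^sub>C x)"
  have a: "?R y \<in> D" and b: "?R w \<in> D" by (rule rb_in)+
  have ab: "?R y + ?R w \<in> D" using a b D by (simp add: csubspace_def)
  have "S (?R y + ?R w) - z *\<^sub>C (?R y + ?R w) = (S (?R y) - z *\<^sub>C ?R y) + (S (?R w) - z *\<^sub>C ?R w)"
    using S a b by (simp add: clinear_on_def scaleC_add_right algebra_simps)
  also have "\<dots> = y + w" by (simp add: rb_right)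
  finally have "?R (y + w) = ?R (S (?R y + ?R w) - z *\<^sub>C (?R y + ?R w))" by simp
  also have "\<dots> = ?R y + ?R w" using ab by (rule rb_left)
  finally show ?thesis .
qed

lemma rb_sc: "inv_into D (\<lambda>x. S x - z *\<^sub>C x) (c *\<^sub>C y) = c *\<^sub>C inv_into D (\<lambda>x. S x - z *\<^sub>C x) y"
proof -
  let ?R = "inv_into D (\<lambda>x. S x - z *\<^sub>C x)"
  have a: "?R y \<in> D" by (rule rb_in)
  have ca: "c *\<^sub>C ?R y \<in> D" using a D by (simp add: csubspace_def)
  have "S (c *\<^sub>C ?R y) - z *\<^sub>C (c *\<^sub>C ?R y) = c *\<^sub>C (S (?R y) - z *\<^sub>C ?R y)"
    using S a by (simp add: clinear_on_def scaleC_diff_right scaleC_scaleC mult.commute)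
  also have "\<dots> = c *\<^sub>C y" by (simp add: rb_right)
  finally have "?R (c *\<^sub>C y) = ?R (S (c *\<^sub>C ?R y) - z *\<^sub>C (c *\<^sub>C ?R y))" by simp
  also have "\<dots> = c *\<^sub>C ?R y" using ca by (rule rb_left)
  finally show ?thesis .
qed

lemma rb_sym:
  assumes Ssym: "\<forall>x\<in>D. \<forall>y\<in>D. cinner (S x) y = cinner x (S y)" and zr: "cnj z = z"
  shows "cinner (inv_into D (\<lambda>x. S x - z *\<^sub>C x) x) y = cinner x (inv_into D (\<lambda>x. S x - z *\<^sub>C x) y)"
proof -
  let ?R = "inv_into D (\<lambda>x. S x - z *\<^sub>C x)"
  have a: "?R x \<in> D" and b: "?R y \<in> D" by (rule rb_in)+
  have "cinner (?R x) y = cinner (?R x) (S (?R y) - z *\<^sub>C ?R y)" by (simp add: rb_right)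
  also have "\<dots> = cinner (?R x) (S (?R y)) - z * cinner (?R x) (?R y)"
    by (simp add: cinner_diff_right cinner_scaleC_right)
  also have "\<dots> = cinner (S (?R x)) (?R y) - cnj z * cinner (?R x) (?R y)"
    using Ssym a b zr by simp
  also have "\<dots> = cinner (S (?R x) - z *\<^sub>C ?R x) (?R y)"
    by (simp add: cinner_diff_left cinner_scaleC_left)
  also have "\<dots> = cinner x (?R y)" by (simp add: rb_right)
  finally show ?thesis .
qed

end

lemma lin_neg_on:
  assumes D: "csubspace D" and S: "clinear_on D S" and v: "v \<in> D"
  shows "S (- v) = - S v" and "- v \<in> D"
proof -
  have e: "- v = (-1) *\<^sub>C v" by (simp add: scaleC_minus_left scaleC_one)
  have "S ((-1) *\<^sub>C v) = (-1) *\<^sub>C S v" using S v unfolding clinear_on_def by blast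
  then show "S (- v) = - S v" by (simp add: scaleC_minus_left scaleC_one)
  show "- v \<in> D" using D v unfolding e csubspace_def by blast
qed



lemma res_lower:
  assumes bij: "bij_betw F D UNIV" and K: "\<forall>y. norm (inv_into D F y) \<le> K * norm y"
  shows "\<forall>x\<in>D. norm x \<le> K * norm (F x)"
proof
  fix x assume x: "x \<in> D"
  have "inv_into D F (F x) = x" using bij x by (simp add: bij_betw_def)
  then show "norm x \<le> K * norm (F x)" using K by metis
qed

lemma claim:
  fixes S B :: "'a::complex_inner \<Rightarrow> 'a" and D :: "'a set" and \<mu> KB :: real
  assumes D: "csubspace D" and S: "clinear_on D S"
    and Ssym: "\<forall>x\<in>D. \<forall>y\<in>D. cinner (S x) y = cinner x (S y)"
    and Badd: "\<And>x y. B (x + y) = B x + B y" and Bsc: "\<And>a x. B (a *\<^sub>C x) = a *\<^sub>C B x"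
    and Bsym: "\<And>x y. cinner (B x) y = cinner x (B y)" and Bpos: "\<And>x. 0 \<le> Re (cinner (B x) x)"
    and Bbd: "\<And>x. norm (B x) \<le> KB * norm x" and KB: "KB > 0"
    and allres: "\<And>s::real. bij_betw (\<lambda>x. S x + s *\<^sub>R B x - complex_of_real \<mu> *\<^sub>C x) D UNIV \<and>
       (\<exists>K. \<forall>y. norm (inv_into D (\<lambda>x. S x + s *\<^sub>R B x - complex_of_real \<mu> *\<^sub>C x) y) \<le> K * norm y)"
  shows "cinner (inv_into D (\<lambda>x. S x - complex_of_real \<mu> *\<^sub>C x) (B x0)) (B x0) = 0"
proof -
  let ?z = "complex_of_real \<mu>"
  let ?R = "inv_into D (\<lambda>x. S x - ?z *\<^sub>C x)"
  have fe: "(\<lambda>x. S x + 0 *\<^sub>R B x - ?z *\<^sub>C x) = (\<lambda>x. S x - ?z *\<^sub>C x)" by simp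
  have bij: "bij_betw (\<lambda>x. S x - ?z *\<^sub>C x) D UNIV" using allres[of 0] unfolding fe by blast
  obtain K0 where K0: "\<forall>y. norm (?R y) \<le> K0 * norm y" using allres[of 0] unfolding fe by blast
  define KQ where "KQ = max K0 0"
  have KQ: "KQ \<ge> 0" unfolding KQ_def by simp
  have Rbd: "norm (?R y) \<le> KQ * norm y" for y
    using K0 unfolding KQ_def by (meson max.cobounded1 mult_right_mono norm_ge_zero order_trans)
  have res: "\<exists>K. \<forall>x\<in>D. norm x \<le> K * norm (S x + s *\<^sub>R B x - ?z *\<^sub>C x)" for s :: real
  proof -
    obtain K where "\<forall>y. norm (inv_into D (\<lambda>x. S x + s *\<^sub>R B x - ?z *\<^sub>C x) y) \<le> K * norm y"
      using allres[of s] by blast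
    then have "\<forall>x\<in>D. norm x \<le> K * norm ((\<lambda>x. S x + s *\<^sub>R B x - ?z *\<^sub>C x) x)"
      using allres[of s] by (intro res_lower) auto
    then show ?thesis by auto
  qed
  have Radd: "?R (x + y) = ?R x + ?R y" for x y by (rule rb_add[OF D S bij])
  have Rsc: "?R (a *\<^sub>C x) = a *\<^sub>C ?R x" for a x by (rule rb_sc[OF D S bij])
  have Rsym: "cinner (?R x) y = cinner x (?R y)" for x y by (rule rb_sym[OF D S bij Ssym]) simp
  have RD: "?R y \<in> D" for y by (rule rb_in[OF D S bij])
  have Req: "S (?R y) - ?z *\<^sub>C ?R y = y" for y by (rule rb_right[OF D S bij])
  have le1: "Re (cinner (?R (B u)) (B u)) \<le> 0" for u
    by (rule sup_arg[OF Badd Bsc Bsym Bpos Bbd KB Radd Rsc Rsym Rbd KQ RD, of S \<mu> 1])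
       (simp_all add: Req res)
  have le2: "Re (cinner ((\<lambda>y. - ?R y) (B u)) (B u)) \<le> 0" for u
  proof (rule sup_arg[OF Badd Bsc Bsym Bpos Bbd KB, of "\<lambda>y. - ?R y" KQ D S \<mu> "-1"])
    show "\<And>x y. - ?R (x + y) = - ?R x + - ?R y" by (simp add: Radd)
    show "\<And>a x. - ?R (a *\<^sub>C x) = a *\<^sub>C - ?R x" by (simp add: Rsc scaleC_minus_right)
    show "\<And>x y. cinner (- ?R x) y = cinner x (- ?R y)" by (simp add: cinner_minus_left cinner_minus_right Rsym)
    show "\<And>x. norm (- ?R x) \<le> KQ * norm x" by (simp add: Rbd)
    show "0 \<le> KQ" by (rule KQ)
    show "\<And>y. - ?R y \<in> D" using lin_neg_on(2)[OF D S RD] by blast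
    show "\<And>y. S (- ?R y) - ?z *\<^sub>C - ?R y = (-1) *\<^sub>R y"
    proof -
      fix y
      have "S (- ?R y) - ?z *\<^sub>C - ?R y = - (S (?R y) - ?z *\<^sub>C ?R y)"
        using lin_neg_on(1)[OF D S RD] by (simp add: scaleC_minus_right)
      then show "S (- ?R y) - ?z *\<^sub>C - ?R y = (-1) *\<^sub>R y" by (simp add: Req)
    qed
    show "(-1::real) \<noteq> 0" by simp
    show "\<And>s. \<exists>K. \<forall>x\<in>D. norm x \<le> K * norm (S x + s *\<^sub>R B x - ?z *\<^sub>C x)" by (rule res)
  qed
  have re: "Re (cinner (?R (B x0)) (B x0)) = 0"
    using le1[of x0] le2[of x0] by (simp add: cinner_minus_left)
  have e: "cinner (?R (B x0)) (B x0) = cnj (cinner (?R (B x0)) (B x0))"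
    by (metis Rsym cinner_commute)
  have im: "Im (cinner (?R (B x0)) (B x0)) = 0"
  proof -
    have "Im (cinner (?R (B x0)) (B x0)) = Im (cnj (cinner (?R (B x0)) (B x0)))" using e by simp
    then show ?thesis by simp
  qed
  show ?thesis using re im by (simp add: complex_eq_iff)
qed



lemma resolvent_est:
  fixes S :: "'a::complex_inner \<Rightarrow> 'a" and D :: "'a set" and \<mu> lam Kl :: real
  assumes D: "csubspace D" and S: "clinear_on D S"
    and Ssym: "\<forall>x\<in>D. \<forall>y\<in>D. cinner (S x) y = cinner x (S y)"
    and bijl: "bij_betw (\<lambda>x. S x - complex_of_real lam *\<^sub>C x) D UNIV"
    and Kl: "\<And>y. norm (inv_into D (\<lambda>x. S x - complex_of_real lam *\<^sub>C x) y) \<le> Kl * norm y"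
    and Kl0: "Kl \<ge> 0"
    and bijm: "bij_betw (\<lambda>x. S x - complex_of_real \<mu> *\<^sub>C x) D UNIV"
    and small: "\<bar>\<mu> - lam\<bar> * Kl \<le> 1/2"
  shows "cinner (inv_into D (\<lambda>x. S x - complex_of_real \<mu> *\<^sub>C x) u) u
           - cinner (inv_into D (\<lambda>x. S x - complex_of_real lam *\<^sub>C x) u) u
         = complex_of_real (\<mu> - lam) * cinner (inv_into D (\<lambda>x. S x - complex_of_real \<mu> *\<^sub>C x) u)
              (inv_into D (\<lambda>x. S x - complex_of_real lam *\<^sub>C x) u)"
    and "cmod (cinner (inv_into D (\<lambda>x. S x - complex_of_real \<mu> *\<^sub>C x) u)
              (inv_into D (\<lambda>x. S x - complex_of_real lam *\<^sub>C x) u)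
          - complex_of_real ((norm (inv_into D (\<lambda>x. S x - complex_of_real lam *\<^sub>C x) u))^2))
         \<le> 2 * \<bar>\<mu> - lam\<bar> * Kl * (norm (inv_into D (\<lambda>x. S x - complex_of_real lam *\<^sub>C x) u))^2"
proof -
  let ?Rl = "inv_into D (\<lambda>x. S x - complex_of_real lam *\<^sub>C x)"
  let ?Rm = "inv_into D (\<lambda>x. S x - complex_of_real \<mu> *\<^sub>C x)"
  define w where "w = ?Rm u"
  define v where "v = ?Rl u"
  define d where "d = \<mu> - lam"
  have wD: "w \<in> D" unfolding w_def by (rule rb_in[OF D S bijm])
  have wu: "S w - complex_of_real \<mu> *\<^sub>C w = u" unfolding w_def by (rule rb_right[OF D S bijm])
  have "S w - complex_of_real lam *\<^sub>C w = (S w - complex_of_real \<mu> *\<^sub>C w) + complex_of_real d *\<^sub>C w"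
    unfolding d_def by (simp add: scaleC_diff_left algebra_simps)
  also have "\<dots> = u + d *\<^sub>R w" by (simp add: wu scaleR_scaleC)
  finally have e1: "S w - complex_of_real lam *\<^sub>C w = u + d *\<^sub>R w" .
  have "w = ?Rl (S w - complex_of_real lam *\<^sub>C w)" using wD by (simp add: rb_left[OF D S bijl])
  also have "\<dots> = v + d *\<^sub>R ?Rl w" unfolding e1 v_def
    by (simp add: rb_add[OF D S bijl] rb_sc[OF D S bijl] scaleR_scaleC)
  finally have ident: "w - v = d *\<^sub>R ?Rl w" by (metis add_diff_cancel_left')
  have Rlsym: "cinner (?Rl x) y = cinner x (?Rl y)" for x y by (rule rb_sym[OF D S bijl Ssym]) simp
  have "cinner w u - cinner v u = cinner (w - v) u" by (simp add: cinner_diff_left)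
  also have "\<dots> = complex_of_real d * cinner (?Rl w) u" unfolding ident by (simp add: cinner_scaleR_left)
  also have "\<dots> = complex_of_real d * cinner w v" unfolding v_def by (simp add: Rlsym)
  finally show "cinner (?Rm u) u - cinner (?Rl u) u = complex_of_real (\<mu> - lam) * cinner (?Rm u) (?Rl u)"
    unfolding w_def v_def d_def .
  have nw: "norm w \<le> 2 * norm v"
  proof -
    have "norm w \<le> norm v + norm (d *\<^sub>R ?Rl w)" using ident by (metis add_diff_cancel_left' diff_add_cancel norm_triangle_ineq)
    also have "norm (d *\<^sub>R ?Rl w) \<le> \<bar>d\<bar> * (Kl * norm w)" using Kl[of w] by (simp add: mult_left_mono)
    also have "\<bar>d\<bar> * (Kl * norm w) \<le> 1/2 * norm w" using small unfolding d_def
      by (metis mult.assoc mult_right_mono norm_ge_zero)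
    finally show ?thesis by simp
  qed
  have "cinner w v - cinner v v = cinner (w - v) v" by (simp add: cinner_diff_left)
  also have "\<dots> = complex_of_real d * cinner (?Rl w) v" unfolding ident by (simp add: cinner_scaleR_left)
  finally have e2: "cinner w v - complex_of_real ((norm v)^2) = complex_of_real d * cinner (?Rl w) v"
    by (simp add: cinner_self)
  have "cmod (complex_of_real d * cinner (?Rl w) v) \<le> \<bar>d\<bar> * (norm (?Rl w) * norm v)"
    by (simp add: norm_mult cinner_cs mult_left_mono)
  also have "\<dots> \<le> \<bar>d\<bar> * ((Kl * norm w) * norm v)"
    using Kl[of w] by (simp add: mult_left_mono mult_right_mono)
  also have "\<dots> \<le> \<bar>d\<bar> * ((Kl * (2 * norm v)) * norm v)"
    using nw Kl0 by (simp add: mult_left_mono mult_right_mono)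
  also have "\<dots> = 2 * \<bar>d\<bar> * Kl * (norm v)^2" by (simp add: power2_eq_square algebra_simps)
  finally show "cmod (cinner (?Rm u) (?Rl u) - complex_of_real ((norm (?Rl u))^2)) \<le> 2 * \<bar>\<mu> - lam\<bar> * Kl * (norm (?Rl u))^2"
    using e2 unfolding w_def v_def d_def by simp
qed



lemma not_spec: "z \<notin> op_spectrum D T \<longleftrightarrow> bij_betw (\<lambda>x. T x - z *\<^sub>C x) D UNIV \<and>
   (\<exists>K. \<forall>y. norm (inv_into D (\<lambda>x. T x - z *\<^sub>C x) y) \<le> K * norm y)"
  by (simp add: op_spectrum_def)

lemma core:
  fixes A B :: "'a::chilbert_space \<Rightarrow> 'a" and D :: "'a set" and lam t :: real
  assumes sa: "self_adjoint D A"
    and bB: "bounded_op B" and sB: "self_adjoint UNIV B"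
    and pB: "\<forall>x. Im (cinner (B x) x) = 0 \<and> 0 \<le> Re (cinner (B x) x)"
    and nz: "\<exists>x. B x \<noteq> 0"
    and lim: "lam islimpt {\<mu>::real. \<forall>t::real. complex_of_real \<mu> \<notin> op_spectrum D (\<lambda>x. A x + t *\<^sub>R B x)}"
  shows "complex_of_real lam \<in> op_spectrum D (\<lambda>x. A x + t *\<^sub>R B x)"
proof (rule ccontr)
  assume notin: "complex_of_real lam \<notin> op_spectrum D (\<lambda>x. A x + t *\<^sub>R B x)"
  define Sset where "Sset = {\<mu>::real. \<forall>t::real. complex_of_real \<mu> \<notin> op_spectrum D (\<lambda>x. A x + t *\<^sub>R B x)}"
  define S where "S = (\<lambda>x. A x + t *\<^sub>R B x)"
  have D: "csubspace D" and Alin: "clinear_on D A" and Asym: "\<forall>x\<in>D. \<forall>y\<in>D. cinner (A x) y = cinner x (A y)"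
    using sa unfolding self_adjoint_def by auto
  have Badd: "\<And>x y. B (x + y) = B x + B y" and Bsc: "\<And>a x. B (a *\<^sub>C x) = a *\<^sub>C B x"
    using bB unfolding bounded_op_def clinear_on_def by auto
  have Bsym: "\<And>x y. cinner (B x) y = cinner x (B y)" using sB unfolding self_adjoint_def by auto
  have Bpos: "\<And>x. 0 \<le> Re (cinner (B x) x)" using pB by auto
  obtain K where K: "\<forall>x. norm (B x) \<le> K * norm x" using bB unfolding bounded_op_def by auto
  define KB where "KB = max K 1"
  have KB: "KB > 0" unfolding KB_def by simp
  have Bbd: "norm (B x) \<le> KB * norm x" for x
    using K unfolding KB_def by (meson max.cobounded1 mult_right_mono norm_ge_zero order_trans)
  have Slin: "clinear_on D S"
    using Alin unfolding clinear_on_def S_def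
    by (simp add: Badd Bsc scaleR_add_right scaleC_add_right scaleC_scaleR_comm)
  have Ssym: "\<forall>x\<in>D. \<forall>y\<in>D. cinner (S x) y = cinner x (S y)"
    using Asym unfolding S_def by (simp add: cinner_add_left cinner_add_right cinner_scaleR_left cinner_scaleR_right Bsym)
  let ?F = "\<lambda>m::real. (\<lambda>x. S x - complex_of_real m *\<^sub>C x)"
  have bijl: "bij_betw (?F lam) D UNIV" and "\<exists>K. \<forall>y. norm (inv_into D (?F lam) y) \<le> K * norm y"
    using notin unfolding not_spec S_def by auto
  then obtain Kl0 where Kl0: "\<forall>y. norm (inv_into D (?F lam) y) \<le> Kl0 * norm y" by blast
  define Kl where "Kl = max Kl0 0"
  have Kl: "Kl \<ge> 0" unfolding Kl_def by simp
  have Rlbd: "norm (inv_into D (?F lam) y) \<le> Kl * norm y" for y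
    using Kl0 unfolding Kl_def by (meson max.cobounded1 mult_right_mono norm_ge_zero order_trans)
  have mS: "bij_betw (\<lambda>x. S x + s *\<^sub>R B x - complex_of_real \<mu> *\<^sub>C x) D UNIV \<and>
       (\<exists>K. \<forall>y. norm (inv_into D (\<lambda>x. S x + s *\<^sub>R B x - complex_of_real \<mu> *\<^sub>C x) y) \<le> K * norm y)"
    if "\<mu> \<in> Sset" for \<mu> s :: real
  proof -
    have "complex_of_real \<mu> \<notin> op_spectrum D (\<lambda>x. A x + (t + s) *\<^sub>R B x)" using that unfolding Sset_def by blast
    moreover have "(\<lambda>x. A x + (t + s) *\<^sub>R B x - complex_of_real \<mu> *\<^sub>C x) = (\<lambda>x. S x + s *\<^sub>R B x - complex_of_real \<mu> *\<^sub>C x)"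
      by (rule ext) (simp add: S_def scaleR_add_left add.assoc)
    ultimately show ?thesis unfolding not_spec by simp
  qed
  have bijm: "bij_betw (?F \<mu>) D UNIV" if "\<mu> \<in> Sset" for \<mu>
    using mS[OF that, of 0] by simp
  obtain x1 where x1: "B x1 \<noteq> 0" using nz by blast
  define u where "u = B x1"
  have cl: "cinner (inv_into D (?F \<mu>) u) u = 0" if "\<mu> \<in> Sset" for \<mu>
    unfolding u_def
    by (rule claim[OF D Slin Ssym Badd Bsc Bsym Bpos Bbd KB]) (use mS[OF that] in auto)
  define v where "v = inv_into D (?F lam) u"
  have S0: "S 0 = 0" using Slin D unfolding clinear_on_def csubspace_def
    by (metis scaleC_zero_left)
  have v0: "v \<noteq> 0"
  proof
    assume "v = 0"
    then have "u = S 0 - complex_of_real lam *\<^sub>C 0" using rb_right[OF D Slin bijl, of u] unfolding v_def by simp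
    then show False using S0 x1 unfolding u_def by simp
  qed
  define nv where "nv = (norm v)^2"
  have nv: "nv > 0" unfolding nv_def using v0 by simp
  have appr: "\<exists>\<mu>\<in>Sset. \<mu> \<noteq> lam \<and> \<bar>\<mu> - lam\<bar> < e" if "e > 0" for e
    using lim that unfolding Sset_def[symmetric] islimpt_approachable dist_real_def by blast
  have est: "cinner (inv_into D (?F \<mu>) u) u - cinner v u = complex_of_real (\<mu> - lam) * cinner (inv_into D (?F \<mu>) u) v \<and>
     cmod (cinner (inv_into D (?F \<mu>) u) v - complex_of_real nv) \<le> 2 * \<bar>\<mu> - lam\<bar> * Kl * nv"
    if "\<mu> \<in> Sset" "\<bar>\<mu> - lam\<bar> * Kl \<le> 1/2" for \<mu>
    using resolvent_est[OF D Slin Ssym bijl Rlbd Kl bijm[OF that(1)] that(2), of u]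
    unfolding v_def nv_def by blast
  have small: "\<bar>\<mu> - lam\<bar> * Kl \<le> 1/4" if "\<bar>\<mu> - lam\<bar> < 1 / (4 * Kl + 1)" for \<mu>
  proof -
    have "\<bar>\<mu> - lam\<bar> * Kl \<le> 1 / (4 * Kl + 1) * Kl" using mult_right_mono[OF less_imp_le[OF that] Kl] .
    also have "\<dots> \<le> 1/4" using Kl by (simp add: field_simps)
    finally show ?thesis .
  qed
  have fl: "cinner v u = 0"
  proof (rule ccontr)
    assume "cinner v u \<noteq> 0"
    define f where "f = cmod (cinner v u)"
    have f: "f > 0" unfolding f_def using \<open>cinner v u \<noteq> 0\<close> by simp
    define e where "e = min (1 / (4 * Kl + 1)) (f / (4 * nv + 1))"
    have e: "e > 0" unfolding e_def using f nv Kl by simp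
    obtain \<mu> where \<mu>: "\<mu> \<in> Sset" "\<mu> \<noteq> lam" "\<bar>\<mu> - lam\<bar> < e" using appr[OF e] by blast
    have sm: "\<bar>\<mu> - lam\<bar> * Kl \<le> 1/4" using \<mu>(3) unfolding e_def by (intro small) simp
    define g where "g = cinner (inv_into D (?F \<mu>) u) v"
    have a: "- cinner v u = complex_of_real (\<mu> - lam) * g" and b: "cmod (g - complex_of_real nv) \<le> 2 * \<bar>\<mu> - lam\<bar> * Kl * nv"
      using est[OF \<mu>(1)] sm cl[OF \<mu>(1)] unfolding g_def by auto
    have "2 * \<bar>\<mu> - lam\<bar> * Kl * nv \<le> nv" using sm nv by (simp add: mult_right_mono)
    then have "cmod g \<le> 2 * nv" using b nv
      by (smt (verit) norm_of_real norm_triangle_ineq2)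
    have "f = \<bar>\<mu> - lam\<bar> * cmod g" unfolding f_def
      by (metis a norm_minus_cancel norm_mult norm_of_real)
    also have "\<dots> \<le> \<bar>\<mu> - lam\<bar> * (2 * nv)" using \<open>cmod g \<le> 2 * nv\<close> by (simp add: mult_left_mono)
    also have "\<dots> < e * (2 * nv)" using \<mu>(3) nv by simp
    also have "\<dots> \<le> f / (4 * nv + 1) * (2 * nv)" unfolding e_def using nv by (intro mult_right_mono) auto
    also have "\<dots> < f" using f nv by (simp add: field_simps add_pos_pos)
    finally have "f < f" .
    then show False by simp
  qed
  obtain \<mu> where \<mu>: "\<mu> \<in> Sset" "\<mu> \<noteq> lam" "\<bar>\<mu> - lam\<bar> < 1 / (4 * Kl + 1)"
    using appr[of "1 / (4 * Kl + 1)"] Kl by auto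
  have sm: "\<bar>\<mu> - lam\<bar> * Kl \<le> 1/4" using \<mu>(3) by (rule small)
  define g where "g = cinner (inv_into D (?F \<mu>) u) v"
  have a: "0 = complex_of_real (\<mu> - lam) * g" and b: "cmod (g - complex_of_real nv) \<le> 2 * \<bar>\<mu> - lam\<bar> * Kl * nv"
    using est[OF \<mu>(1)] sm cl[OF \<mu>(1)] fl unfolding g_def by auto
  have "g = 0" using a \<mu>(2) by simp
  then have "nv \<le> 2 * \<bar>\<mu> - lam\<bar> * Kl * nv" using b nv by simp
  also have "\<dots> \<le> nv / 2" using sm nv by (simp add: mult_right_mono)
  finally show False using nv by simp
qed

theorem lemma2p8:
  fixes A B :: "'a::chilbert_space \<Rightarrow> 'a" and D :: "'a set" and lam :: real
  assumes "self_adjoint D A"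
    and "bounded_op B" and "self_adjoint UNIV B"
    and "\<forall>x. Im (cinner (B x) x) = 0 \<and> 0 \<le> Re (cinner (B x) x)"
    and "\<exists>x. B x \<noteq> 0"
    and "lam islimpt {\<mu>::real. \<forall>t::real. complex_of_real \<mu> \<notin> op_spectrum D (\<lambda>x. A x + t *\<^sub>R B x)}"
  shows "(\<forall>t::real. complex_of_real lam \<in> op_spectrum D (\<lambda>x. A x + t *\<^sub>R B x)) \<and>
         (\<forall>\<mu>::real. \<mu> islimpt {\<nu>::real. \<forall>t::real. complex_of_real \<nu> \<notin> op_spectrum D (\<lambda>x. A x + t *\<^sub>R B x)}
             \<longrightarrow> \<mu> \<notin> {\<nu>::real. \<forall>t::real. complex_of_real \<nu> \<notin> op_spectrum D (\<lambda>x. A x + t *\<^sub>R B x)})"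
proof (intro conjI allI impI)
  fix t :: real
  show "complex_of_real lam \<in> op_spectrum D (\<lambda>x. A x + t *\<^sub>R B x)"
    by (rule core[OF assms])
next
  fix \<mu> :: real
  assume "\<mu> islimpt {\<nu>::real. \<forall>t::real. complex_of_real \<nu> \<notin> op_spectrum D (\<lambda>x. A x + t *\<^sub>R B x)}"
  then have "complex_of_real \<mu> \<in> op_spectrum D (\<lambda>x. A x + 0 *\<^sub>R B x)"
    by (rule core[OF assms(1-5)])
  then show "\<mu> \<notin> {\<nu>::real. \<forall>t::real. complex_of_real \<nu> \<notin> op_spectrum D (\<lambda>x. A x + t *\<^sub>R B x)}"
    by blast
qed

end
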